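(* Let $\theta_1,\dots,\theta_{10}$ be real numbers such that $0<\theta_i<\theta_j<\theta_k<180$ for each of the triples $(i,j,k)\in\{(2,4,6),(1,5,9),(1,5,10),(1,5,7),(1,3,7),(1,4,7),(3,5,8),(2,8,9),(6,7,10)\}$, and write $s_{ij}=\sin(\theta_j-\theta_i)$. Then the $8\times 7$ matrix $$S_8=\begin{pmatrix} 0&-s_{58}&0&0&-s_{35}&0&0\\ -s_{89}&0&0&0&s_{29}&-s_{28}&0\\ s_{46}&0&-s_{26}&s_{24}&0&0&0\\ 0&0&0&-s_{7,10}&0&0&-s_{67}\\ 0&s_{17}&0&0&0&0&0\\ 0&0&s_{17}&0&0&0&0\\ 0&0&0&0&0&s_{15}&0\\ 0&0&0&0&0&0&s_{15} \end{pmatrix}$$ is a simplex.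
   Context: Angles are in degrees. A real matrix with $r+1$ rows and $r$ columns is called a simplex if, up to multiplication by a constant, there is precisely one positive linear dependency between its rows, i.e. there is a linear dependency among the rows with all coefficients strictly positive, and every linear dependency among the rows is a scalar multiple of it. (The columns of $S_8$ correspond to the unknowns $r_2,r_3,r_4,r_6,r_8,r_9,r_{10}$ in the triangle inequalities of a ten-line arrangement.) *)

theory Defs
  imports Complex_Main
begin

text \<open>A real matrix with m rows and n columns is modelled as a function
  M :: nat => nat => real, entry (i,j) for i < m, j < n (0-based).\<close>

definition row_dependency :: "nat \<Rightarrow> nat \<Rightarrow> (nat \<Rightarrow> nat \<Rightarrow> real) \<Rightarrow> (nat \<Rightarrow> real) \<Rightarrow> bool" where
  "row_dependency m n M c \<longleftrightarrow> (\<forall>j<n. (\<Sum>i<m. c i * M i j) = 0)"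

definition is_simplex :: "nat \<Rightarrow> (nat \<Rightarrow> nat \<Rightarrow> real) \<Rightarrow> bool" where
  "is_simplex r M \<longleftrightarrow>
     (\<exists>c. (\<forall>i<r+1. c i > 0) \<and> row_dependency (r+1) r M c \<and>
          (\<forall>d. row_dependency (r+1) r M d \<longrightarrow> (\<exists>t. \<forall>i<r+1. d i = t * c i)))"

definition sdeg :: "(nat \<Rightarrow> real) \<Rightarrow> nat \<Rightarrow> nat \<Rightarrow> real" where
  "sdeg \<theta> i j = sin ((\<theta> j - \<theta> i) * pi / 180)"

definition S8 :: "(nat \<Rightarrow> real) \<Rightarrow> nat \<Rightarrow> nat \<Rightarrow> real" where
  "S8 \<theta> i j = (let s = sdeg \<theta> in
     [[0, - s 5 8, 0, 0, - s 3 5, 0, 0],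
      [- s 8 9, 0, 0, 0, s 2 9, - s 2 8, 0],
      [s 4 6, 0, - s 2 6, s 2 4, 0, 0, 0],
      [0, 0, 0, - s 7 10, 0, 0, - s 6 7],
      [0, s 1 7, 0, 0, 0, 0, 0],
      [0, 0, s 1 7, 0, 0, 0, 0],
      [0, 0, 0, 0, 0, s 1 5, 0],
      [0, 0, 0, 0, 0, 0, s 1 5]] ! i ! j)"

end

theory Submission
  imports Defs
begin

lemma eqs: "row_dependency 8 7 (S8 th) d \<longleftrightarrow>
  (- d 1 * sdeg th 8 9 + d 2 * sdeg th 4 6 = 0 \<and>
   - d 0 * sdeg th 5 8 + d 4 * sdeg th 1 7 = 0 \<and>
   - d 2 * sdeg th 2 6 + d 5 * sdeg th 1 7 = 0 \<and>
   d 2 * sdeg th 2 4 - d 3 * sdeg th 7 10 = 0 \<and>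
   - d 0 * sdeg th 3 5 + d 1 * sdeg th 2 9 = 0 \<and>
   - d 1 * sdeg th 2 8 + d 6 * sdeg th 1 5 = 0 \<and>
   - d 3 * sdeg th 6 7 + d 7 * sdeg th 1 5 = 0)"
  unfolding row_dependency_def S8_def Let_def
  by (simp add: numeral_eq_Suc lessThan_Suc All_less_Suc) (simp add: algebra_simps conj_ac)

lemma spos: "\<theta> i < \<theta> j \<Longrightarrow> \<theta> j - \<theta> i < 180 \<Longrightarrow> 0 < sdeg \<theta> i j"
  unfolding sdeg_def by (rule sin_gt_zero) (use pi_gt_zero mult_strict_left_mono[of "\<theta> j - \<theta> i" 180 pi] in \<open>auto simp: field_simps\<close>)

theorem lemmal:
  fixes \<theta> :: "nat \<Rightarrow> real"
  assumes "\<forall>(i,j,k) \<in> set [(2,4,6),(1,5,9),(1,5,10),(1,5,7),(1,3,7),(1,4,7),(3,5,8),(2,8,9),(6,7,10)].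
             0 < \<theta> i \<and> \<theta> i < \<theta> j \<and> \<theta> j < \<theta> k \<and> \<theta> k < 180"
  shows "is_simplex 7 (S8 \<theta>)"
proof -
  let ?s = "sdeg \<theta>"
  have p89: "?s 8 9 > 0" and p46: "?s 4 6 > 0" and p17: "?s 1 7 > 0" and p26: "?s 2 6 > 0"
    and p24: "?s 2 4 > 0" and p710: "?s 7 10 > 0" and p35: "?s 3 5 > 0" and p29: "?s 2 9 > 0"
    and p28: "?s 2 8 > 0" and p15: "?s 1 5 > 0" and p67: "?s 6 7 > 0" and p58: "?s 5 8 > 0"
    using assms by (auto intro!: spos)
  define c :: "nat \<Rightarrow> real" where "c = (\<lambda>i.
     [?s 4 6 / ?s 8 9 * ?s 2 9 / ?s 3 5, ?s 4 6 / ?s 8 9, 1, ?s 2 4 / ?s 7 10,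
      ?s 4 6 / ?s 8 9 * ?s 2 9 / ?s 3 5 * ?s 5 8 / ?s 1 7, ?s 2 6 / ?s 1 7,
      ?s 4 6 / ?s 8 9 * ?s 2 8 / ?s 1 5, ?s 2 4 / ?s 7 10 * ?s 6 7 / ?s 1 5] ! i)"
  have cpos: "\<forall>i<7+1. c i > 0"
    using p89 p46 p17 p26 p24 p710 p35 p29 p28 p15 p67 p58
    by (auto simp: c_def less_Suc_eq numeral_eq_Suc)
  have "row_dependency 8 7 (S8 \<theta>) c"
    unfolding eqs using p89 p46 p17 p26 p24 p710 p35 p29 p28 p15 p67 p58
    by (simp add: c_def field_simps)
  then have cdep: "row_dependency (7+1) 7 (S8 \<theta>) c" by simp
  have uniq: "\<exists>t. \<forall>i<7+1. d i = t * c i" if "row_dependency (7+1) 7 (S8 \<theta>) d" for d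
  proof (intro exI[of _ "d 2"] allI impI)
    fix i :: nat assume "i < 7+1"
    then have "i \<in> {0,1,2,3,4,5,6,7}" by auto
    moreover have "row_dependency 8 7 (S8 \<theta>) d" using that by simp
    note e = this[unfolded eqs]
    have h1: "d 1 = d 2 * ?s 4 6 / ?s 8 9" using e p89 by (simp add: field_simps)
    have h0: "d 0 = d 1 * ?s 2 9 / ?s 3 5" using e p35 by (simp add: field_simps)
    have h3: "d 3 = d 2 * ?s 2 4 / ?s 7 10" using e p710 by (simp add: field_simps)
    have h4: "d 4 = d 0 * ?s 5 8 / ?s 1 7" using e p17 by (simp add: field_simps)
    have h5: "d 5 = d 2 * ?s 2 6 / ?s 1 7" using e p17 by (simp add: field_simps)
    have h6: "d 6 = d 1 * ?s 2 8 / ?s 1 5" using e p15 by (simp add: field_simps)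
    have h7: "d 7 = d 3 * ?s 6 7 / ?s 1 5" using e p15 by (simp add: field_simps)
    have h1': "d (Suc 0) = d 2 * ?s 4 6 / ?s 8 9" using h1 by simp
    ultimately show "d i = d 2 * c i"
      by (auto simp: c_def h7 h6 h5 h4 h3 h0 h1 h1')
  qed
  show ?thesis unfolding is_simplex_def using cpos cdep uniq by blast
qed

end
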